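(* Let $p$ be a prime with $p\notin\{2,3,7,43\}$. Then $\mathcal{M}_p^{(2)}=\emptyset$.
   Context: For positive integers $k,n$ let $S_k(n)=\sum_{i=1}^{n} i^k$. For an integer $a$, $\mathcal{M}_a$ denotes the set of positive integers $n$ such that $S_n(n)\equiv a\pmod{n}$. For a prime $p$, $\mathcal{M}_p^{(2)}=\{n\in\mathcal{M}_p : p^2\mid n,\ p^3\nmid n\}$. *)

theory Defs
  imports "HOL-Number_Theory.Number_Theory"
begin

definition S :: "nat \<Rightarrow> nat \<Rightarrow> int" where
  "S k n = (\<Sum>i=1..n. (int i) ^ k)"

definition M :: "int \<Rightarrow> nat set" where
  "M a = {n. n > 0 \<and> [S n n = a] (mod (int n))}"

definition M2 :: "nat \<Rightarrow> nat set" where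
  "M2 p = {n \<in> M (int p). p^2 dvd n \<and> \<not> p^3 dvd n}"

end

theory Submission
  imports Defs "HOL-Number_Theory.Residue_Primitive_Roots"
begin


lemma notprime0: "(a::nat) dvd n \<Longrightarrow> 1 < a \<Longrightarrow> a < n \<Longrightarrow> \<not> prime n"
  by (auto simp: prime_nat_iff)

lemma S_add: "S k (a + b) = S k a + (\<Sum>i=1..b. (int (a+i))^k)"
proof (induction b)
  case 0 then show ?case by simp
next
  case (Suc b)
  have "S k (a + Suc b) = S k (a+b) + (int (a + Suc b))^k"
    unfolding S_def by (simp add: add.commute)
  with Suc show ?case by (simp add: algebra_simps)
qed

lemma binom_cong:
  fixes x y :: int and q k :: nat
  assumes "q dvd k"
  shows "[(x + int q * y)^k = x^k] (mod (int q)^2)"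
proof -
  have e: "(x + int q * y)^k = (\<Sum>j\<le>k. of_nat (k choose j) * (int q * y)^j * x^(k-j))"
    using binomial_ring[of "int q * y" x k] by (simp add: add.commute)
  have "(\<Sum>j\<le>k. of_nat (k choose j) * (int q * y)^j * x^(k-j)) =
        x^k + (\<Sum>j\<in>{1..k}. of_nat (k choose j) * (int q * y)^j * x^(k-j))"
  proof -
    have "{..k} = insert 0 {1..k}" by auto
    then show ?thesis by simp
  qed
  moreover have "(int q)^2 dvd (\<Sum>j\<in>{1..k}. of_nat (k choose j) * (int q * y)^j * x^(k-j))"
  proof (rule dvd_sum)
    fix j assume j: "j \<in> {1..k}"
    show "(int q)^2 dvd of_nat (k choose j) * (int q * y)^j * x^(k-j)"
    proof (cases "j = 1")
      case True
      then have "of_nat (k choose j) * (int q * y)^j * x^(k-j) = int k * int q * y * x^(k-1)" by simp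
      moreover have "(int q)^2 dvd int k * int q"
        using assms by (simp add: power2_eq_square)
      ultimately show ?thesis by simp
    next
      case False
      with j have "j \<ge> 2" by auto
      then have "(int q)^2 dvd (int q)^j" by (simp add: le_imp_power_dvd)
      then have "(int q)^2 dvd (int q * y)^j" by (simp add: power_mult_distrib)
      then show ?thesis by simp
    qed
  qed
  ultimately show ?thesis unfolding e
    by (simp add: cong_iff_dvd_diff)
qed



lemma S_period:
  assumes "\<And>c i. [(int (c*d+i))^k = (int i)^k] (mod Mo)"
  shows "[S k (c*d) = int c * S k d] (mod Mo)"
proof (induction c)
  case 0 then show ?case by (simp add: S_def)
next
  case (Suc c)
  have "S k (Suc c * d) = S k (c*d) + (\<Sum>i=1..d. (int (c*d+i))^k)"
    using S_add[of k "c*d" d] by (simp add: add.commute)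
  moreover have "[(\<Sum>i=1..d. (int (c*d+i))^k) = (\<Sum>i=1..d. (int i)^k)] (mod Mo)"
    by (rule cong_sum) (rule assms)
  ultimately have "[S k (Suc c * d) = int c * S k d + S k d] (mod Mo)"
    using Suc by (metis S_def cong_add)
  then show ?case by (simp add: algebra_simps)
qed

lemma S_period_d: "[S k (c*d) = int c * S k d] (mod int d)"
proof (rule S_period)
  fix c i
  have "[int (c*d+i) = int i] (mod int d)"
    by (simp add: cong_iff_dvd_diff)
  then show "[(int (c*d+i))^k = (int i)^k] (mod int d)" by (rule cong_pow)
qed

lemma "int ` {1..<q} = {1..<int q}"
  by (simp add: image_int_atLeastLessThan)

lemma sum_prime_powers:
  fixes q k :: nat
  assumes q: "prime q" and nd: "\<not> (q - 1) dvd k"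
  shows "int q dvd S k q"
proof -
  have k: "k > 0" using nd by (cases k) auto
  obtain g where g: "residue_primroot q g" using prime_primitive_root_exists[OF prime_gt_1_nat[OF q] q] by auto
  have ordg: "ord q g = q - 1" and cop: "coprime q g"
    using g q by (auto simp: residue_primroot_def totient_prime)
  have ng: "\<not> [g^k = 1] (mod q)" using ord_divides[of g k q] nd ordg by auto
  define Q where "Q = int q"
  define G where "G = int g"
  define T where "T = (\<Sum>m\<in>{1..<Q}. m^k)"
  have Qp: "prime Q" using q by (simp add: Q_def)
  have copG: "coprime G Q" using cop by (simp add: G_def Q_def coprime_commute)
  have bij: "bij_betw (\<lambda>m. G * m mod Q) {1..<Q} {1..<Q}"
    using bij_betw_int_remainders_mult[OF copG] .
  have T1: "T = (\<Sum>m\<in>{1..<Q}. (G * m mod Q)^k)"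
    unfolding T_def using sum.reindex_bij_betw[OF bij, of "\<lambda>m. m^k"] by simp
  moreover have "[(\<Sum>m\<in>{1..<Q}. (G * m mod Q)^k) = (\<Sum>m\<in>{1..<Q}. G^k * m^k)] (mod Q)"
  proof (rule cong_sum)
    fix m show "[(G * m mod Q)^k = G^k * m^k] (mod Q)"
      by (metis cong_pow mod_mod_trivial power_mult_distrib cong_def)
  qed
  ultimately have "[T = (\<Sum>m\<in>{1..<Q}. G^k * m^k)] (mod Q)" by (simp only: T1)
  then have "[T = G^k * T] (mod Q)" by (simp add: T_def sum_distrib_left)
  then have "Q dvd T - G^k * T" by (simp add: cong_iff_dvd_diff)
  then have "Q dvd -(T - G^k * T)" by (simp only: dvd_minus_iff)
  then have "Q dvd (G^k - 1) * T" by (simp add: algebra_simps)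
  moreover have "\<not> Q dvd G^k - 1"
  proof
    assume "Q dvd G^k - 1"
    then have "[int (g^k) = int 1] (mod int q)" by (simp add: G_def Q_def cong_iff_dvd_diff)
    then show False using ng cong_int_iff by blast
  qed
  ultimately have QT: "Q dvd T" using Qp prime_dvd_mult_iff by blast
  have "S k q = (\<Sum>i\<in>{1..<q}. (int i)^k) + Q^k"
  proof -
    obtain r where r: "q = Suc r" using prime_gt_0_nat[OF q] gr0_implies_Suc by blast
    show ?thesis unfolding S_def Q_def r
      by (simp add: sum.cl_ivl_Suc atLeastLessThanSuc_atLeastAtMost)
  qed
  also have "(\<Sum>i\<in>{1..<q}. (int i)^k) = T"
    unfolding T_def Q_def
  proof -
    have "(\<Sum>m\<in>int ` {1..<q}. m^k) = (\<Sum>i\<in>{1..<q}. (int i)^k)"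
      by (subst sum.reindex) (auto simp: inj_on_def)
    then show "(\<Sum>i\<in>{1..<q}. (int i)^k) = (\<Sum>m\<in>{1..<int q}. m^k)"
      by (simp add: image_int_atLeastLessThan)
  qed
  finally show ?thesis using QT k by (simp add: Q_def)
qed



lemma split_dvd:
  fixes r d m :: nat
  assumes "prime r" "d dvd r*m"
  shows "d dvd m \<or> (\<exists>e. d = r*e \<and> e dvd m)"
proof (cases "r dvd d")
  case True
  then obtain e where "d = r*e" by auto
  with assms show ?thesis using prime_gt_0_nat[OF assms(1)] by auto
next
  case False
  then have "coprime r d" using assms(1) by (simp add: prime_imp_coprime)
  then have "coprime d r" by (simp add: coprime_commute)
  then show ?thesis using assms(2) coprime_dvd_mult_right_iff by blast
qed

lemma dvd43: "d dvd (43::nat) \<Longrightarrow> d = 1 \<or> d = 43"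
proof -
  have "prime (43::nat)" unfolding prime_nat_iff' by (simp add: atLeastLessThan_upt upt_rec)
  then show "d dvd (43::nat) \<Longrightarrow> d = 1 \<or> d = 43" by (auto simp: prime_nat_iff)
qed

lemma divs1806:
  assumes "d dvd (1806::nat)"
  shows "d \<in> {1,2,3,6,7,14,21,42,43,86,129,258,301,602,903,1806}"
proof -
  have p2: "prime (2::nat)" and p3: "prime (3::nat)" and p7: "prime (7::nat)" by simp_all
  have a: "\<And>d. d dvd (301::nat) \<Longrightarrow> d \<in> {1,7,43,301}"
  proof -
    fix d :: nat assume "d dvd 301"
    then have "d dvd 7*43" by simp
    from split_dvd[OF p7 this] show "d \<in> {1,7,43,301}" using dvd43 by fastforce
  qed
  have b: "\<And>d. d dvd (903::nat) \<Longrightarrow> d \<in> {1,7,43,301,3,21,129,903}"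
  proof -
    fix d :: nat assume "d dvd 903"
    then have "d dvd 3*301" by simp
    from split_dvd[OF p3 this] show "d \<in> {1,7,43,301,3,21,129,903}" using a by fastforce
  qed
  have "d dvd 2*903" using assms by simp
  from split_dvd[OF p2 this] show ?thesis using b by fastforce
qed

lemma notprime: "(a::nat) dvd n \<Longrightarrow> 1 < a \<Longrightarrow> a < n \<Longrightarrow> \<not> prime n"
  by (auto simp: prime_nat_iff)

lemma aux_np: "prime (d+1) \<Longrightarrow> (d::nat) = c \<Longrightarrow> \<not> prime (c+1) \<Longrightarrow> False"
  by blast

lemma final_enum:
  assumes "d dvd (1806::nat)" "prime (d+1)"
  shows "d + 1 \<in> {2,3,7,43}"
proof -
  note P = assms(2)
  have D: "d = 1 \<or> d = 2 \<or> d = 3 \<or> d = 6 \<or> d = 7 \<or> d = 14 \<or> d = 21 \<or> d = 42 \<or> d = 43 \<or> d = 86 \<or> d = 129 \<or> d = 258 \<or> d = 301 \<or> d = 602 \<or> d = 903 \<or> d = 1806"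
    using divs1806[OF assms(1)] by simp
  have "d \<noteq> 3" by (rule notI, erule aux_np[OF P], rule notprime[of 2]) auto
  moreover have "d \<noteq> 7" by (rule notI, erule aux_np[OF P], rule notprime[of 2]) auto
  moreover have "d \<noteq> 14" by (rule notI, erule aux_np[OF P], rule notprime[of 3]) auto
  moreover have "d \<noteq> 21" by (rule notI, erule aux_np[OF P], rule notprime[of 2]) auto
  moreover have "d \<noteq> 43" by (rule notI, erule aux_np[OF P], rule notprime[of 2]) auto
  moreover have "d \<noteq> 86" by (rule notI, erule aux_np[OF P], rule notprime[of 3]) auto
  moreover have "d \<noteq> 129" by (rule notI, erule aux_np[OF P], rule notprime[of 2]) auto
  moreover have "d \<noteq> 258" by (rule notI, erule aux_np[OF P], rule notprime[of 7]) auto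
  moreover have "d \<noteq> 301" by (rule notI, erule aux_np[OF P], rule notprime[of 2]) auto
  moreover have "d \<noteq> 602" by (rule notI, erule aux_np[OF P], rule notprime[of 3]) auto
  moreover have "d \<noteq> 903" by (rule notI, erule aux_np[OF P], rule notprime[of 2]) auto
  moreover have "d \<noteq> 1806" by (rule notI, erule aux_np[OF P], rule notprime[of 13]) auto
  ultimately show ?thesis using D by auto
qed



lemma S_period_sq:
  fixes q k c :: nat
  assumes "q dvd k"
  shows "[S k (c*q) = int c * S k q] (mod (int q)^2)"
proof (rule S_period)
  fix c i
  have e: "int (c*q+i) = int i + int q * int c" by simp
  show "[(int (c*q+i))^k = (int i)^k] (mod (int q)^2)"
    unfolding e by (rule binom_cong[OF assms])
qed

lemma int_prime_dvd_eq: "prime (q::nat) \<Longrightarrow> prime (p::nat) \<Longrightarrow> int q dvd int p \<Longrightarrow> q = p"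
  by (simp add: primes_dvd_imp_eq)

theorem mainTheorem6:
  fixes p :: nat
  assumes "prime p" and "p \<notin> {2, 3, 7, 43}"
  shows "M2 p = {}"
proof (rule ccontr)
  assume "M2 p \<noteq> {}"
  then obtain n where n: "n \<in> M2 p" by auto
  then have n0: "n > 0" and C: "[S n n = int p] (mod int n)" and p2: "p^2 dvd n" and p3: "\<not> p^3 dvd n"
    by (auto simp: M2_def M_def)
  have pp: "prime p" by (rule assms(1))
  have Cd: "[S n n = int p] (mod int d)" if "d dvd n" for d
    using cong_dvd_modulus[OF C] that by simp
  have F1: "(q - 1) dvd n" if q: "prime q" "q dvd n" "q \<noteq> p" for q
  proof (rule ccontr)
    assume nd: "\<not> (q - 1) dvd n"
    obtain c where c: "n = c * q" using q(2) by (metis dvd_def mult.commute)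
    have "[S n n = int c * S n q] (mod int q)" using S_period_d[of n c q] c by simp
    moreover have "int q dvd S n q" by (rule sum_prime_powers[OF q(1) nd])
    ultimately have "int q dvd S n n" by (simp add: cong_dvd_iff)
    moreover have "[S n n = int p] (mod int q)" using Cd[OF q(2)] .
    ultimately have "int q dvd int p" using cong_dvd_iff by blast
    then show False using int_prime_dvd_eq[OF q(1) pp] q(3) by blast
  qed
  have F2: "(p - 1) dvd n"
  proof (rule ccontr)
    assume nd: "\<not> (p - 1) dvd n"
    obtain c where c: "n = c * (p*p)" using p2 by (metis dvd_def mult.commute power2_eq_square)
    have pn: "p dvd n" using p2 by (simp add: power2_eq_square c)
    have c1: "[S n n = int c * S n (p*p)] (mod (int p)^2)" using S_period_d[of n c "p*p"] c
      by (simp add: power2_eq_square)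
    have c2: "[S n (p*p) = int p * S n p] (mod (int p)^2)" by (rule S_period_sq[OF pn])
    have "int p dvd S n p" by (rule sum_prime_powers[OF pp nd])
    then have "(int p)^2 dvd int p * S n p" by (simp add: power2_eq_square)
    then have "(int p)^2 dvd S n (p*p)" using c2 cong_dvd_iff by blast
    then have "(int p)^2 dvd int c * S n (p*p)" by simp
    then have a: "(int p)^2 dvd S n n" using c1 cong_dvd_iff by blast
    have "[S n n = int p] (mod (int p)^2)" using Cd[OF p2] by simp
    with a have "(int p)^2 dvd int p" using cong_dvd_iff by blast
    then have "p^2 dvd p" by (metis of_nat_dvd_iff of_nat_power)
    then have "p^2 \<le> p" using prime_gt_0_nat[OF pp] by (rule dvd_imp_le)
    moreover have p2': "p \<ge> 2" using prime_ge_2_nat[OF pp] .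
    moreover have "2 * p \<le> p * p" using p2' by (rule mult_right_mono) simp
    ultimately show False by (simp add: power2_eq_square)
  qed
  have F3: False if r: "prime r" "r \<noteq> p" "r^2 dvd n" for r
  proof -
    obtain c where c: "n = c * (r*r)" using r(3) by (metis dvd_def mult.commute power2_eq_square)
    have "[S n n = int c * S n (r*r)] (mod int (r*r))" using S_period_d[of n c "r*r"] c by simp
    then have c1: "[S n n = int c * S n (r*r)] (mod int r)"
      by (rule cong_dvd_modulus) simp
    have "[S n (r*r) = int r * S n r] (mod int r)" using S_period_d[of n r r] by simp
    moreover have "int r dvd int r * S n r" by simp
    ultimately have "int r dvd S n (r*r)" using cong_dvd_iff by blast
    then have "int r dvd int c * S n (r*r)" by simp
    with c1 have "int r dvd S n n" using cong_dvd_iff by blast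
    moreover have "[S n n = int p] (mod int r)" using Cd[of r] r(3) by (simp add: power2_eq_square dvd_mult_left)
    ultimately have "int r dvd int p" using cong_dvd_iff by blast
    then show False using int_prime_dvd_eq[OF r(1) pp] r(2) by blast
  qed
  define P where "P q \<longleftrightarrow> prime q \<and> q dvd n \<and> q \<notin> {2::nat, 3, 7, 43}" for q
  have Pp: "P p" using assms p2 by (auto simp: P_def power2_eq_square dvd_mult_left)
  define q where "q = (LEAST q. P q)"
  have Pq: "P q" unfolding q_def by (rule LeastI[of P p, OF Pp])
  have minq: "\<not> P r" if "r < q" for r using not_less_Least[of r P] that q_def by blast
  have qp: "prime q" and qn: "q dvd n" and qs: "q \<notin> {2,3,7,43}" using Pq by (auto simp: P_def)
  have q1n: "(q - 1) dvd n" using F1[OF qp qn] F2 by (cases "q = p") auto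
  have q10: "q - 1 \<noteq> 0" using prime_gt_1_nat[OF qp] by simp
  have "(q - 1) dvd 1806"
  proof (rule multiplicity_le_imp_dvd[OF q10])
    fix r :: nat assume r: "prime r"
    show "multiplicity r (q - 1) \<le> multiplicity r 1806"
    proof (cases "r dvd q - 1")
      case False then show ?thesis by (simp add: not_dvd_imp_multiplicity_0)
    next
      case True
      have "r \<le> q - 1" using True q10 by (simp add: dvd_imp_le)
      then have "r < q" using q10 by simp
      moreover have "r dvd n" using True q1n by (rule dvd_trans)
      ultimately have rs: "r \<in> {2,3,7,43}" using minq r P_def by blast
      then have rp: "r \<noteq> p" using assms(2) by blast
      have "\<not> r^2 dvd q - 1"
      proof
        assume "r^2 dvd q - 1"
        then have "r^2 dvd n" using q1n by (rule dvd_trans)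
        then show False using F3 r rp by blast
      qed
      then have m1: "multiplicity r (q - 1) \<le> 1"
        using power_dvd_iff_le_multiplicity[OF q10, of r 2] r by (cases "r = 1") (auto simp: not_le)
      have "r^1 dvd 1806" using rs by auto
      then have "1 \<le> multiplicity r (1806::nat)"
        using power_dvd_iff_le_multiplicity[of "1806::nat" r 1] r by (cases "r = 1") auto
      with m1 show ?thesis by simp
    qed
  qed
  moreover have "prime ((q - 1) + 1)" using qp q10 by simp
  ultimately have "(q - 1) + 1 \<in> {2,3,7,43}" by (rule final_enum)
  then show False using qs q10 by simp
qed

end
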